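(* Let $\Gamma$ be a finitely generated group which is stable and LEF, let $\pi:\mathbb{F}\twoheadrightarrow\Gamma$ be an epimorphism from a free group on a finite basis $X$, and let $S=\pi(X)$. Then $\Gamma$ is residually finite and for every positive integer $l$, $$\max\big\{\mathcal{L}_\Gamma^S\big(F_\Gamma^\pi(2l)\big)!,\ \mathcal{L}_\Gamma^S(l)!\big\}\ge\mathcal{R}_\Gamma^S(l).$$
   Context: For finite $\Omega$, $d_\Omega(\sigma,\tau)=|\{\omega:\sigma(\omega)\ne\tau(\omega)\}|/|\Omega|$. A pair $(\delta,E)$, $\delta\in(0,1]$, $E\subseteq\ker\pi$ finite, is valid for $\epsilon>0$ if for every finite $\Omega$ and homomorphism $\rho:\mathbb{F}\to\mathrm{Sym}(\Omega)$ with $d_\Omega(\rho(r),\mathrm{id})<\delta$ for all $r\in E$ there is a homomorphism $\phi:\Gamma\to\mathrm{Sym}(\Omega)$ with $d_\Omega(\rho(x),\phi(\pi(x)))<\epsilon$ for all $x\in X$; $\Gamma$ is stable if valid pairs exist for all $\epsilon$. $F_\Gamma^\pi(x)=\inf\{\|E\|/\delta:(\delta,E)\text{ valid for }1/x\}$, $\|E\|=\sum_{r\in E}|r|$ (word length in $X$). $B_S(t)$ is the closed ball of radius $t\ge0$ about $e$ in the word metric of $S$. A map $\psi:A\to\Delta$ from a subset $A$ of a group is a local embedding if it is injective and $\psi(gh)=\psi(g)\psi(h)$ whenever $g,h,gh\in A$. $\Gamma$ is LEF if every finite subset admits a local embedding into a finite group. $\mathcal{L}_\Gamma^S(t)$ is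 the minimal order of a finite group admitting a local embedding of $B_S(t)$. $\mathcal{R}_\Gamma^S(l)$ is the minimal order of a finite group $\Delta$ admitting a homomorphism $\Gamma\to\Delta$ injective on $B_S(l)$. *)

theory Defs
  imports Complex_Main "HOL-Algebra.Sym_Groups"
begin

text \<open>A letter (x, True) stands for x, (x, False) for x^-1.\<close>

fun reduced :: "('x \<times> bool) list \<Rightarrow> bool" where
  "reduced [] = True"
| "reduced [a] = True"
| "reduced (a # b # w) = ((\<not> (fst a = fst b \<and> snd a \<noteq> snd b)) \<and> reduced (b # w))"

definition free_words :: "'x set \<Rightarrow> ('x \<times> bool) list set" where
  "free_words X = {w. fst ` set w \<subseteq> X \<and> reduced w}"

text \<open>Evaluation of a word in a group G given the images f of the letters;
  for w a reduced word this is the homomorphism F \<rightarrow> G extending f.\<close>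
definition weval :: "('g, 'b) monoid_scheme \<Rightarrow> ('x \<Rightarrow> 'g) \<Rightarrow> ('x \<times> bool) list \<Rightarrow> 'g" where
  "weval G f w = foldr (\<lambda>(x, b) a. (if b then f x else inv\<^bsub>G\<^esub> (f x)) \<otimes>\<^bsub>G\<^esub> a) w \<one>\<^bsub>G\<^esub>"

definition free_kernel :: "('g, 'b) monoid_scheme \<Rightarrow> 'x set \<Rightarrow> ('x \<Rightarrow> 'g) \<Rightarrow> ('x \<times> bool) list set" where
  "free_kernel G X p = {w \<in> free_words X. weval G p w = \<one>\<^bsub>G\<^esub>}"

definition epi_from_free :: "('g, 'b) monoid_scheme \<Rightarrow> 'x set \<Rightarrow> ('x \<Rightarrow> 'g) \<Rightarrow> bool" where
  "epi_from_free G X p \<longleftrightarrow> p ` X \<subseteq> carrier G \<and> weval G p ` free_words X = carrier G"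

definition ham :: "nat \<Rightarrow> (nat \<Rightarrow> nat) \<Rightarrow> (nat \<Rightarrow> nat) \<Rightarrow> real" where
  "ham n \<sigma> \<tau> = real (card {i \<in> {1..n}. \<sigma> i \<noteq> \<tau> i}) / real n"

text \<open>Homomorphisms rho : F(X) \<rightarrow> Sym(Omega) correspond to maps r : X \<rightarrow> Sym(Omega);
  rho(w) = weval (sym_group n) r w. Finite sets Omega are taken as {1..n}.\<close>
definition valid_pair ::
  "('g, 'b) monoid_scheme \<Rightarrow> 'x set \<Rightarrow> ('x \<Rightarrow> 'g) \<Rightarrow> real \<Rightarrow> real \<Rightarrow> ('x \<times> bool) list set \<Rightarrow> bool" where
  "valid_pair G X p \<epsilon> \<delta> E \<longleftrightarrow>
     0 < \<delta> \<and> \<delta> \<le> 1 \<and> finite E \<and> E \<subseteq> free_kernel G X p \<and>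
     (\<forall>n::nat. \<forall>r. n \<ge> 1 \<longrightarrow> r ` X \<subseteq> carrier (sym_group n) \<longrightarrow>
        (\<forall>w\<in>E. ham n (weval (sym_group n) r w) id < \<delta>) \<longrightarrow>
        (\<exists>\<phi> \<in> hom G (sym_group n). \<forall>x\<in>X. ham n (r x) (\<phi> (p x)) < \<epsilon>))"

definition stable :: "('g, 'b) monoid_scheme \<Rightarrow> 'x set \<Rightarrow> ('x \<Rightarrow> 'g) \<Rightarrow> bool" where
  "stable G X p \<longleftrightarrow> (\<forall>\<epsilon>>0. \<exists>\<delta> E. valid_pair G X p \<epsilon> \<delta> E)"

definition wnorm :: "('x \<times> bool) list set \<Rightarrow> real" where
  "wnorm E = real (\<Sum>w\<in>E. length w)"

definition stab_fun :: "('g, 'b) monoid_scheme \<Rightarrow> 'x set \<Rightarrow> ('x \<Rightarrow> 'g) \<Rightarrow> real \<Rightarrow> real" where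
  "stab_fun G X p x = Inf {wnorm E / \<delta> | \<delta> E. valid_pair G X p (1 / x) \<delta> E}"

definition ball_S :: "('g, 'b) monoid_scheme \<Rightarrow> 'g set \<Rightarrow> real \<Rightarrow> 'g set" where
  "ball_S G S t = {weval G id w | w. fst ` set w \<subseteq> S \<and> real (length w) \<le> t}"

definition local_embedding ::
  "('g, 'b) monoid_scheme \<Rightarrow> 'g set \<Rightarrow> ('d, 'c) monoid_scheme \<Rightarrow> ('g \<Rightarrow> 'd) \<Rightarrow> bool" where
  "local_embedding G A D \<psi> \<longleftrightarrow> \<psi> ` A \<subseteq> carrier D \<and> inj_on \<psi> A \<and>
     (\<forall>g\<in>A. \<forall>h\<in>A. g \<otimes>\<^bsub>G\<^esub> h \<in> A \<longrightarrow> \<psi> (g \<otimes>\<^bsub>G\<^esub> h) = \<psi> g \<otimes>\<^bsub>D\<^esub> \<psi> h)"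

text \<open>Finite groups are represented (up to isomorphism) by groups with carrier in nat.\<close>
definition finite_group :: "nat monoid \<Rightarrow> bool" where
  "finite_group D \<longleftrightarrow> group D \<and> finite (carrier D)"

definition LEF :: "('g, 'b) monoid_scheme \<Rightarrow> bool" where
  "LEF G \<longleftrightarrow> (\<forall>A. A \<subseteq> carrier G \<longrightarrow> finite A \<longrightarrow>
     (\<exists>D \<psi>. finite_group D \<and> local_embedding G A D \<psi>))"

definition residually_finite :: "('g, 'b) monoid_scheme \<Rightarrow> bool" where
  "residually_finite G \<longleftrightarrow> (\<forall>g\<in>carrier G. g \<noteq> \<one>\<^bsub>G\<^esub> \<longrightarrow>
     (\<exists>D h. finite_group D \<and> h \<in> hom G D \<and> h g \<noteq> \<one>\<^bsub>D\<^esub>))"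

definition LEF_growth :: "('g, 'b) monoid_scheme \<Rightarrow> 'g set \<Rightarrow> real \<Rightarrow> nat" where
  "LEF_growth G S t = (LEAST m. \<exists>D \<psi>. finite_group D \<and> card (carrier D) = m \<and>
     local_embedding G (ball_S G S t) D \<psi>)"

definition RF_growth :: "('g, 'b) monoid_scheme \<Rightarrow> 'g set \<Rightarrow> real \<Rightarrow> nat" where
  "RF_growth G S l = (LEAST m. \<exists>D h. finite_group D \<and> card (carrier D) = m \<and>
     h \<in> hom G D \<and> inj_on h (ball_S G S l))"

end

theory Submission
  imports Defs
begin

lemma weval_Nil[simp]: "weval G f [] = \<one>\<^bsub>G\<^esub>"
  by (simp add: weval_def)

lemma weval_Cons[simp]: "weval G f (a # w) =
  (if snd a then f (fst a) else inv\<^bsub>G\<^esub> (f (fst a))) \<otimes>\<^bsub>G\<^esub> weval G f w"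
  by (cases a) (simp add: weval_def)

lemma weval_closed:
  assumes "group G" "f ` fst ` set w \<subseteq> carrier G"
  shows "weval G f w \<in> carrier G"
  using assms(2)
proof (induction w)
  case Nil then show ?case using assms(1) by (simp add: group.is_monoid monoid.one_closed)
next
  case (Cons a w)
  then show ?case using assms(1)
    by (auto simp: group.inv_closed monoid.m_closed group.is_monoid)
qed

lemma weval_map:
  "weval G id (map (\<lambda>(x, b). (p x, b)) w) = weval G p w"
  by (induction w) (auto split: prod.splits)

lemma ball_S_X:
  "ball_S G (p ` X) t = {weval G p w | w. fst ` set w \<subseteq> X \<and> real (length w) \<le> t}"
proof
  show "ball_S G (p ` X) t \<subseteq> {weval G p w | w. fst ` set w \<subseteq> X \<and> real (length w) \<le> t}"
  proof
    fix g assume "g \<in> ball_S G (p ` X) t"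
    then obtain w where w: "g = weval G id w" "fst ` set w \<subseteq> p ` X" "real (length w) \<le> t"
      unfolding ball_S_def by blast
    have "\<exists>u. fst ` set u \<subseteq> X \<and> map (\<lambda>(x, b). (p x, b)) u = w" using w(2)
    proof (induction w)
      case Nil then show ?case by auto
    next
      case (Cons a w)
      then obtain u where u: "fst ` set u \<subseteq> X" "map (\<lambda>(x, b). (p x, b)) u = w" by auto
      from Cons.prems obtain x where x: "x \<in> X" "fst a = p x" by auto
      show ?case
        by (rule exI[of _ "(x, snd a) # u"]) (use u x in \<open>auto simp: prod_eq_iff\<close>)
    qed
    then obtain u where u: "fst ` set u \<subseteq> X" "map (\<lambda>(x, b). (p x, b)) u = w" by auto
    then have "g = weval G p u" "length u = length w" using w weval_map[of G p u] by auto
    then show "g \<in> {weval G p w | w. fst ` set w \<subseteq> X \<and> real (length w) \<le> t}"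
      using u w by auto
  qed
next
  show "{weval G p w | w. fst ` set w \<subseteq> X \<and> real (length w) \<le> t} \<subseteq> ball_S G (p ` X) t"
  proof
    fix g assume "g \<in> {weval G p w | w. fst ` set w \<subseteq> X \<and> real (length w) \<le> t}"
    then obtain u where u: "g = weval G p u" "fst ` set u \<subseteq> X" "real (length u) \<le> t" by blast
    let ?w = "map (\<lambda>(x, b). (p x, b)) u"
    have "fst ` set ?w \<subseteq> p ` X" using u(2) by (force split: prod.splits)
    moreover have "g = weval G id ?w" using u(1) weval_map[of G p u] by simp
    moreover have "real (length ?w) \<le> t" using u(3) by simp
    ultimately show "g \<in> ball_S G (p ` X) t" unfolding ball_S_def by blast
  qed
qed

lemma ball_S_finite_carrier:
  assumes "group G" "finite X" "p ` X \<subseteq> carrier G"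
  shows "finite (ball_S G (p ` X) t) \<and> ball_S G (p ` X) t \<subseteq> carrier G"
proof
  let ?W = "{w. set w \<subseteq> (X \<times> (UNIV::bool set)) \<and> length w \<le> nat \<lfloor>t\<rfloor>}"
  have fin: "finite ?W" by (rule finite_lists_length_le) (use assms(2) in \<open>simp add: finite_cartesian_product\<close>)
  have "ball_S G (p ` X) t \<subseteq> weval G p ` ?W"
  proof
    fix g assume "g \<in> ball_S G (p ` X) t"
    then obtain u where u: "g = weval G p u" "fst ` set u \<subseteq> X" "real (length u) \<le> t"
      unfolding ball_S_X by blast
    have "length u \<le> nat \<lfloor>t\<rfloor>" using u(3) by linarith
    moreover have "set u \<subseteq> X \<times> UNIV" using u(2) by force
    ultimately show "g \<in> weval G p ` ?W" using u(1) by blast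
  qed
  then show "finite (ball_S G (p ` X) t)" using fin finite_subset by blast
  show "ball_S G (p ` X) t \<subseteq> carrier G"
  proof
    fix g assume "g \<in> ball_S G (p ` X) t"
    then obtain u where u: "g = weval G p u" "fst ` set u \<subseteq> X" "real (length u) \<le> t"
      unfolding ball_S_X by blast
    then show "g \<in> carrier G" using weval_closed[OF assms(1), of p u] assms(3) by blast
  qed
qed

lemma transport_nat:
  assumes H: "group H" "finite (carrier H)"
  shows "\<exists>D f. finite_group D \<and> card (carrier D) = card (carrier H) \<and> f \<in> hom H D \<and>
           inj_on f (carrier H) \<and> f \<one>\<^bsub>H\<^esub> = \<one>\<^bsub>D\<^esub>"
proof -
  obtain f where f: "bij_betw f (carrier H) {0..<card (carrier H)}"
    using ex_bij_betw_finite_nat[OF H(2)] by blast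
  define g where "g = inv_into (carrier H) f"
  have gf: "\<And>x. x \<in> carrier H \<Longrightarrow> g (f x) = x"
    using f by (simp add: g_def bij_betw_inv_into_left)
  have fg: "\<And>y. y \<in> {0..<card (carrier H)} \<Longrightarrow> f (g y) = y"
    using f by (simp add: g_def bij_betw_inv_into_right)
  have gc: "\<And>y. y \<in> {0..<card (carrier H)} \<Longrightarrow> g y \<in> carrier H"
    using f by (metis bij_betw_def g_def inv_into_into)
  have fc: "\<And>x. x \<in> carrier H \<Longrightarrow> f x \<in> {0..<card (carrier H)}"
    using f bij_betwE by blast
  define D :: "nat monoid" where "D = \<lparr>carrier = {0..<card (carrier H)},
      mult = (\<lambda>a b. f (g a \<otimes>\<^bsub>H\<^esub> g b)), one = f \<one>\<^bsub>H\<^esub>\<rparr>"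
  interpret H: group H by (rule H(1))
  have grp: "group D"
  proof (rule groupI)
    show "\<And>x y. x \<in> carrier D \<Longrightarrow> y \<in> carrier D \<Longrightarrow> x \<otimes>\<^bsub>D\<^esub> y \<in> carrier D"
      unfolding D_def using fc gc H.m_closed by (metis partial_object.select_convs(1) monoid.select_convs(1))
    show "\<one>\<^bsub>D\<^esub> \<in> carrier D" using fc[OF H.one_closed] by (simp add: D_def)
    show "\<And>x y z. x \<in> carrier D \<Longrightarrow> y \<in> carrier D \<Longrightarrow> z \<in> carrier D \<Longrightarrow>
        x \<otimes>\<^bsub>D\<^esub> y \<otimes>\<^bsub>D\<^esub> z = x \<otimes>\<^bsub>D\<^esub> (y \<otimes>\<^bsub>D\<^esub> z)"
      by (simp add: D_def gc gf H.m_assoc)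
    show "\<And>x. x \<in> carrier D \<Longrightarrow> \<one>\<^bsub>D\<^esub> \<otimes>\<^bsub>D\<^esub> x = x"
      by (simp add: D_def gc gf fg)
    show "\<And>x. x \<in> carrier D \<Longrightarrow> \<exists>y\<in>carrier D. y \<otimes>\<^bsub>D\<^esub> x = \<one>\<^bsub>D\<^esub>"
    proof -
      fix x assume "x \<in> carrier D"
      then have x: "x \<in> {0..<card (carrier H)}" by (simp add: D_def)
      show "\<exists>y\<in>carrier D. y \<otimes>\<^bsub>D\<^esub> x = \<one>\<^bsub>D\<^esub>"
        by (rule bexI[of _ "f (inv\<^bsub>H\<^esub> (g x))"]) (use x fc[OF H.inv_closed[OF gc[OF x]]] in \<open>simp_all add: D_def gc gf\<close>)
    qed
  qed
  have hom: "f \<in> hom H D"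
    by (rule homI) (use fc in \<open>simp_all add: D_def gf\<close>)
  show ?thesis
    apply (rule exI[of _ D], rule exI[of _ f])
    using grp hom f by (auto simp: finite_group_def D_def bij_betw_def)
qed

definition dis :: "nat \<Rightarrow> (nat \<Rightarrow> nat) \<Rightarrow> (nat \<Rightarrow> nat) \<Rightarrow> nat set" where
  "dis m f h = {i \<in> {1..m}. f i \<noteq> h i}"

lemma dis_comp:
  assumes "f1 permutes {1..m}" "f2 permutes {1..m}"
  shows "card (dis m (f1 \<circ> f2) (h1 \<circ> h2)) \<le> card (dis m f1 h1) + card (dis m f2 h2)"
proof -
  let ?Q = "{i \<in> {1..m}. f2 i \<in> dis m f1 h1}"
  have sub: "dis m (f1 \<circ> f2) (h1 \<circ> h2) \<subseteq> dis m f2 h2 \<union> ?Q"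
  proof
    fix i assume "i \<in> dis m (f1 \<circ> f2) (h1 \<circ> h2)"
    then have i: "i \<in> {1..m}" "f1 (f2 i) \<noteq> h1 (h2 i)" by (auto simp: dis_def)
    have f2i: "f2 i \<in> {1..m}" using permutes_in_image[OF assms(2)] i(1) by blast
    show "i \<in> dis m f2 h2 \<union> ?Q"
    proof (cases "f2 i = h2 i")
      case True
      then have "f2 i \<in> dis m f1 h1" using i f2i unfolding dis_def by simp
      then show ?thesis using i(1) by blast
    next
      case False
      then show ?thesis using i(1) unfolding dis_def by blast
    qed
  qed
  have "card ?Q \<le> card (dis m f1 h1)"
  proof (rule card_inj_on_le[of f2])
    show "inj_on f2 ?Q" using permutes_inj[OF assms(2)] by (simp add: inj_on_def)
    show "f2 ` ?Q \<subseteq> dis m f1 h1" by blast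
    show "finite (dis m f1 h1)" by (simp add: dis_def)
  qed
  moreover have "card (dis m (f1 \<circ> f2) (h1 \<circ> h2)) \<le> card (dis m f2 h2 \<union> ?Q)"
    by (rule card_mono[OF _ sub]) (simp add: dis_def)
  moreover have "card (dis m f2 h2 \<union> ?Q) \<le> card (dis m f2 h2) + card ?Q"
    by (rule card_Un_le)
  ultimately show ?thesis by linarith
qed

lemma dis_inv:
  assumes "f permutes {1..m}" "h permutes {1..m}"
  shows "card (dis m (inv' f) (inv' h)) \<le> card (dis m f h)"
proof -
  have "dis m (inv' f) (inv' h) \<subseteq> f ` dis m f h"
  proof
    fix i assume "i \<in> dis m (inv' f) (inv' h)"
    then have i: "i \<in> {1..m}" "inv' f i \<noteq> inv' h i" by (auto simp: dis_def)
    let ?j = "inv' f i"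
    have fj: "f ?j = i" using permutes_inverses(1)[OF assms(1)] by simp
    have jm: "?j \<in> {1..m}" using permutes_in_image[OF permutes_inv[OF assms(1)]] i(1) by simp
    have "h ?j \<noteq> i"
    proof
      assume "h ?j = i"
      then have "inv' h i = ?j" using permutes_inverses(2)[OF assms(2)] by metis
      then show False using i(2) by simp
    qed
    then have "?j \<in> dis m f h" using fj jm by (auto simp: dis_def)
    then show "i \<in> f ` dis m f h" using fj by force
  qed
  then have "card (dis m (inv' f) (inv' h)) \<le> card (f ` dis m f h)"
    by (rule card_mono[rotated]) (simp add: dis_def)
  also have "\<dots> \<le> card (dis m f h)" by (rule card_image_le) (simp add: dis_def)
  finally show ?thesis .
qed

lemma core:
  fixes G :: "('g, 'b) monoid_scheme" and X :: "'x set" and p :: "'x \<Rightarrow> 'g"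
    and \<Delta> :: "nat monoid" and \<psi> :: "'g \<Rightarrow> nat"
  assumes G: "group G" and finX0: "finite X" and pX: "p ` X \<subseteq> carrier G"
    and l: "l > 0" and tl: "real l \<le> t"
    and vp: "valid_pair G X p (1 / (2 * real l)) \<delta> E"
    and Elen: "\<forall>r\<in>E. real (length r) \<le> t"
    and D: "finite_group \<Delta>" and psi: "local_embedding G (ball_S G (p ` X) t) \<Delta> \<psi>"
  shows "\<exists>\<phi>. \<phi> \<in> hom G (sym_group (card (carrier \<Delta>))) \<and> inj_on \<phi> (ball_S G (p ` X) (real l))"
proof -
  interpret G: group G by (rule G)
  interpret D: group \<Delta> using D by (simp add: finite_group_def)
  define m where "m = card (carrier \<Delta>)"
  have finD: "finite (carrier \<Delta>)" using D by (simp add: finite_group_def)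
  have m1: "m \<ge> 1" unfolding m_def using finD D.one_closed
    by (metis One_nat_def Suc_leI card_gt_0_iff empty_iff)
  obtain \<beta> where \<beta>: "bij_betw \<beta> {1..m} (carrier \<Delta>)"
    using ex_bij_betw_nat_finite_1[OF finD] unfolding m_def by blast
  define \<gamma> where "\<gamma> = inv_into {1..m} \<beta>"
  have \<beta>c: "\<And>i. i \<in> {1..m} \<Longrightarrow> \<beta> i \<in> carrier \<Delta>" using \<beta> bij_betwE by blast
  have \<gamma>c: "\<And>y. y \<in> carrier \<Delta> \<Longrightarrow> \<gamma> y \<in> {1..m}"
    using \<beta> unfolding \<gamma>_def by (metis bij_betw_def inv_into_into)
  have \<beta>\<gamma>: "\<And>y. y \<in> carrier \<Delta> \<Longrightarrow> \<beta> (\<gamma> y) = y"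
    using \<beta> unfolding \<gamma>_def by (simp add: bij_betw_inv_into_right)
  have \<gamma>\<beta>: "\<And>i. i \<in> {1..m} \<Longrightarrow> \<gamma> (\<beta> i) = i"
    using \<beta> unfolding \<gamma>_def by (simp add: bij_betw_inv_into_left)
  have \<gamma>inj: "inj_on \<gamma> (carrier \<Delta>)"
    using \<beta> unfolding \<gamma>_def by (simp add: bij_betw_def inj_on_inv_into)
  define Lm where "Lm d = (\<lambda>i. if i \<in> {1..m} then \<gamma> (d \<otimes>\<^bsub>\<Delta>\<^esub> \<beta> i) else i)" for d
  have Lm_mult: "Lm d1 \<circ> Lm d2 = Lm (d1 \<otimes>\<^bsub>\<Delta>\<^esub> d2)"
    if "d1 \<in> carrier \<Delta>" "d2 \<in> carrier \<Delta>" for d1 d2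
  proof
    fix i show "(Lm d1 \<circ> Lm d2) i = Lm (d1 \<otimes>\<^bsub>\<Delta>\<^esub> d2) i"
    proof (cases "i \<in> {1..m}")
      case True
      then have "d2 \<otimes>\<^bsub>\<Delta>\<^esub> \<beta> i \<in> carrier \<Delta>" using that \<beta>c by simp
      then show ?thesis using True that \<beta>c \<gamma>c \<beta>\<gamma> by (simp add: Lm_def D.m_assoc)
    next
      case False
      then have "Lm d2 i = i" "Lm d1 i = i" "Lm (d1 \<otimes>\<^bsub>\<Delta>\<^esub> d2) i = i"
        by (simp_all only: Lm_def if_False)
      then show ?thesis by simp
    qed
  qed
  have Lm_one: "Lm \<one>\<^bsub>\<Delta>\<^esub> = id"
    by (rule ext) (simp add: Lm_def \<beta>c \<gamma>\<beta>)
  have Lm_perm: "Lm d permutes {1..m}" if "d \<in> carrier \<Delta>" for d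
  proof -
    have a: "Lm (inv\<^bsub>\<Delta>\<^esub> d) (Lm d x) = x" for x
      using Lm_mult[of "inv\<^bsub>\<Delta>\<^esub> d" d] that Lm_one by (metis D.inv_closed D.l_inv comp_apply id_apply)
    have b: "Lm d (Lm (inv\<^bsub>\<Delta>\<^esub> d) x) = x" for x
      using Lm_mult[of d "inv\<^bsub>\<Delta>\<^esub> d"] that Lm_one by (metis D.inv_closed D.r_inv comp_apply id_apply)
    show ?thesis unfolding permutes_def
    proof (intro conjI allI impI)
      fix x assume "x \<notin> {1..m}" then show "Lm d x = x" unfolding Lm_def by (rule if_not_P)
    next
      fix y show "\<exists>!x. Lm d x = y" using a b by metis
    qed
  qed
  have Lm_inv: "inv\<^bsub>sym_group m\<^esub> (Lm d) = Lm (inv\<^bsub>\<Delta>\<^esub> d)" if "d \<in> carrier \<Delta>" for d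
  proof (rule group.inv_equality[OF sym_group_is_group])
    show "Lm (inv\<^bsub>\<Delta>\<^esub> d) \<otimes>\<^bsub>sym_group m\<^esub> Lm d = \<one>\<^bsub>sym_group m\<^esub>"
      using Lm_mult[of "inv\<^bsub>\<Delta>\<^esub> d" d] that Lm_one by (simp add: sym_group_mult sym_group_one)
    show "Lm d \<in> carrier (sym_group m)" using Lm_perm that by (simp add: sym_group_carrier)
    show "Lm (inv\<^bsub>\<Delta>\<^esub> d) \<in> carrier (sym_group m)" using Lm_perm that by (simp add: sym_group_carrier)
  qed
  define B where "B = ball_S G (p ` X) t"
  have Bw: "weval G p w \<in> B" if "fst ` set w \<subseteq> X" "real (length w) \<le> t" for w
    using that unfolding B_def ball_S_X by blast
  have psiB: "\<psi> ` B \<subseteq> carrier \<Delta>" "inj_on \<psi> B"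
     "\<And>g h. g \<in> B \<Longrightarrow> h \<in> B \<Longrightarrow> g \<otimes>\<^bsub>G\<^esub> h \<in> B \<Longrightarrow> \<psi> (g \<otimes>\<^bsub>G\<^esub> h) = \<psi> g \<otimes>\<^bsub>\<Delta>\<^esub> \<psi> h"
    using psi unfolding local_embedding_def B_def by auto
  have t1: "1 \<le> t" using l tl by linarith
  have oneB: "\<one>\<^bsub>G\<^esub> \<in> B" using Bw[of "[]"] t1 by simp
  have psi1: "\<psi> \<one>\<^bsub>G\<^esub> = \<one>\<^bsub>\<Delta>\<^esub>"
  proof -
    have "\<psi> \<one>\<^bsub>G\<^esub> = \<psi> \<one>\<^bsub>G\<^esub> \<otimes>\<^bsub>\<Delta>\<^esub> \<psi> \<one>\<^bsub>G\<^esub>" using psiB(3)[OF oneB oneB] oneB by simp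
    moreover have "\<psi> \<one>\<^bsub>G\<^esub> \<in> carrier \<Delta>" using psiB(1) oneB by blast
    ultimately show ?thesis by (metis D.l_cancel_one)
  qed
  have letterB: "(if b then p x else inv\<^bsub>G\<^esub> (p x)) \<in> B" if "x \<in> X" for x b
    using Bw[of "[(x, b)]"] that t1 pX by auto
  have psi_inv: "\<psi> (inv\<^bsub>G\<^esub> (p x)) = inv\<^bsub>\<Delta>\<^esub> (\<psi> (p x))" if "x \<in> X" for x
  proof -
    have px: "p x \<in> B" "inv\<^bsub>G\<^esub> (p x) \<in> B" using letterB[OF that, of True] letterB[OF that, of False] by auto
    have pxc: "p x \<in> carrier G" using pX that by blast
    have "\<psi> (inv\<^bsub>G\<^esub> (p x)) \<otimes>\<^bsub>\<Delta>\<^esub> \<psi> (p x) = \<one>\<^bsub>\<Delta>\<^esub>"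
      using psiB(3)[OF px(2) px(1)] pxc oneB psi1 by simp
    then show ?thesis using psiB(1) px by (metis D.inv_equality image_subset_iff)
  qed
  define \<rho> where "\<rho> x = Lm (\<psi> (p x))" for x
  have pxB: "p x \<in> B" if "x \<in> X" for x using letterB[OF that, of True] by simp
  have \<rho>c: "\<rho> x \<in> carrier (sym_group m)" if "x \<in> X" for x
    using Lm_perm psiB(1) pxB[OF that] unfolding \<rho>_def sym_group_carrier by blast
  have key: "fst ` set w \<subseteq> X \<longrightarrow> real (length w) \<le> t \<longrightarrow>
       weval (sym_group m) \<rho> w = Lm (\<psi> (weval G p w))" for w
  proof (induction w)
    case Nil then show ?case by (simp add: sym_group_one psi1 Lm_one)
  next
    case (Cons a w)
    obtain x b where a: "a = (x, b)" by (cases a)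
    show ?case
    proof (intro impI)
      assume as: "fst ` set (a # w) \<subseteq> X" "real (length (a # w)) \<le> t"
      then have x: "x \<in> X" and w: "fst ` set w \<subseteq> X" "real (length w) \<le> t" using a by auto
      define ga where "ga = (if b then p x else inv\<^bsub>G\<^esub> (p x))"
      have gaB: "ga \<in> B" using letterB[OF x] unfolding ga_def by simp
      have gwB: "weval G p w \<in> B" using Bw[OF w] .
      have wa: "weval G p (a # w) = ga \<otimes>\<^bsub>G\<^esub> weval G p w" unfolding a ga_def by simp
      have prodB: "ga \<otimes>\<^bsub>G\<^esub> weval G p w \<in> B" using Bw[OF as] wa by simp
      have l1: "(if b then \<rho> x else inv\<^bsub>sym_group m\<^esub> (\<rho> x)) = Lm (\<psi> ga)"
        using Lm_inv psi_inv[OF x] psiB(1) pxB[OF x] unfolding ga_def \<rho>_def by auto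
      have "weval (sym_group m) \<rho> (a # w) = (if b then \<rho> x else inv\<^bsub>sym_group m\<^esub> (\<rho> x)) \<circ> weval (sym_group m) \<rho> w"
        unfolding a by (simp add: sym_group_mult)
      also have "\<dots> = Lm (\<psi> ga) \<circ> Lm (\<psi> (weval G p w))"
        unfolding l1 using Cons.IH w by simp
      also have "\<dots> = Lm (\<psi> ga \<otimes>\<^bsub>\<Delta>\<^esub> \<psi> (weval G p w))"
        using Lm_mult psiB(1) gaB gwB by blast
      also have "\<dots> = Lm (\<psi> (ga \<otimes>\<^bsub>G\<^esub> weval G p w))" using psiB(3)[OF gaB gwB prodB] by simp
      also have "ga \<otimes>\<^bsub>G\<^esub> weval G p w = weval G p (a # w)" using wa by simp
      finally show "weval (sym_group m) \<rho> (a # w) = Lm (\<psi> (weval G p (a # w)))" .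
    qed
  qed
  have vp': "\<forall>n::nat. \<forall>r. n \<ge> 1 \<longrightarrow> r ` X \<subseteq> carrier (sym_group n) \<longrightarrow>
        (\<forall>w\<in>E. ham n (weval (sym_group n) r w) id < \<delta>) \<longrightarrow>
        (\<exists>\<phi> \<in> hom G (sym_group n). \<forall>x\<in>X. ham n (r x) (\<phi> (p x)) < 1 / (2 * real l))"
    and \<delta>0: "0 < \<delta>" and Ek: "E \<subseteq> free_kernel G X p"
    using vp unfolding valid_pair_def by auto
  have rel: "ham m (weval (sym_group m) \<rho> w) id < \<delta>" if "w \<in> E" for w
  proof -
    have "fst ` set w \<subseteq> X" "weval G p w = \<one>\<^bsub>G\<^esub>"
      using Ek that unfolding free_kernel_def free_words_def by auto
    then have "weval (sym_group m) \<rho> w = id" using key[of w] Elen that psi1 Lm_one by simp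
    then show ?thesis using \<delta>0 by (simp add: ham_def)
  qed
  obtain \<phi> where \<phi>: "\<phi> \<in> hom G (sym_group m)" "\<forall>x\<in>X. ham m (\<rho> x) (\<phi> (p x)) < 1 / (2 * real l)"
    using vp'[rule_format, OF m1, of \<rho>] \<rho>c rel by blast
  interpret h: group_hom G "sym_group m" \<phi>
    using \<phi>(1) G sym_group_is_group by (simp add: group_hom_def group_hom_axioms_def)
  define cx where "cx x = card (dis m (\<rho> x) (\<phi> (p x)))" for x
  have cxb: "2 * l * cx x < m" if "x \<in> X" for x
  proof -
    have "real (cx x) / real m < 1 / (2 * real l)"
      using \<phi>(2) that unfolding cx_def ham_def dis_def by auto
    then have "real (cx x) * (2 * real l) < real m" using m1 l
      by (simp add: field_simps)
    then have "real (2 * l * cx x) < real m" by (simp add: algebra_simps)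
    then show ?thesis by linarith
  qed
  define C where "C = Max (insert 0 (cx ` X))"
  have finX: "finite (insert 0 (cx ` X))" using finX0 by simp
  have cxC: "cx x \<le> C" if "x \<in> X" for x
    unfolding C_def using finX that by (simp add: Max_ge)
  have Cb: "2 * l * C < m"
  proof -
    have "C \<in> insert 0 (cx ` X)" unfolding C_def using finX by (rule Max_in) simp
    then show ?thesis using cxb m1 by auto
  qed
  have \<phi>c: "\<phi> g \<in> carrier (sym_group m)" if "g \<in> carrier G" for g
    using that by simp
  have bound: "fst ` set w \<subseteq> X \<longrightarrow>
      card (dis m (weval (sym_group m) \<rho> w) (\<phi> (weval G p w))) \<le> length w * C" for w
  proof (induction w)
    case Nil then show ?case by (simp add: sym_group_one dis_def)
  next
    case (Cons a w)
    obtain x b where a: "a = (x, b)" by (cases a)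
    show ?case
    proof
      assume as: "fst ` set (a # w) \<subseteq> X"
      then have x: "x \<in> X" and w: "fst ` set w \<subseteq> X" using a by auto
      have pxc: "p x \<in> carrier G" using pX x by blast
      have gwc: "weval G p w \<in> carrier G" using weval_closed[OF G, of p w] w pX by blast
      have Rc: "weval (sym_group m) \<rho> w \<in> carrier (sym_group m)"
        using weval_closed[OF sym_group_is_group, of \<rho> w] w \<rho>c by blast
      define A where "A = (if b then \<rho> x else inv' (\<rho> x))"
      define Ph where "Ph = (if b then \<phi> (p x) else inv' (\<phi> (p x)))"
      have eq1: "weval (sym_group m) \<rho> (a # w) = A \<circ> weval (sym_group m) \<rho> w"
        using a \<rho>c[OF x] by (simp add: A_def sym_group_mult)
      have eq2: "\<phi> (weval G p (a # w)) = Ph \<circ> \<phi> (weval G p w)"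
        using a pxc gwc \<phi>c[OF pxc] by (simp add: Ph_def sym_group_mult)
      have Ap: "A permutes {1..m}" using \<rho>c[OF x] permutes_inv
        unfolding A_def sym_group_carrier by auto
      have Rp: "weval (sym_group m) \<rho> w permutes {1..m}" using Rc sym_group_carrier by blast
      have AC: "card (dis m A Ph) \<le> C"
      proof (cases b)
        case True then show ?thesis using cxC[OF x] by (simp add: A_def Ph_def cx_def)
      next
        case False
        have "card (dis m A Ph) \<le> cx x" unfolding A_def Ph_def cx_def using False
          dis_inv[of "\<rho> x" m "\<phi> (p x)"] \<rho>c[OF x] \<phi>c[OF pxc] by (simp add: sym_group_carrier)
        then show ?thesis using cxC[OF x] by linarith
      qed
      have "card (dis m (weval (sym_group m) \<rho> (a # w)) (\<phi> (weval G p (a # w))))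
          \<le> card (dis m A Ph) + card (dis m (weval (sym_group m) \<rho> w) (\<phi> (weval G p w)))"
        unfolding eq1 eq2 by (rule dis_comp[OF Ap Rp])
      also have "\<dots> \<le> C + length w * C" using AC Cons.IH w by simp
      finally show "card (dis m (weval (sym_group m) \<rho> (a # w)) (\<phi> (weval G p (a # w))))
          \<le> length (a # w) * C" by simp
    qed
  qed
  have "inj_on \<phi> (ball_S G (p ` X) (real l))"
  proof (rule inj_onI)
    fix g h assume g: "g \<in> ball_S G (p ` X) (real l)" and h: "h \<in> ball_S G (p ` X) (real l)"
      and eq: "\<phi> g = \<phi> h"
    obtain u where u: "g = weval G p u" "fst ` set u \<subseteq> X" "real (length u) \<le> real l"
      using g unfolding ball_S_X by blast
    obtain v where v: "h = weval G p v" "fst ` set v \<subseteq> X" "real (length v) \<le> real l"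
      using h unfolding ball_S_X by blast
    have ut: "real (length u) \<le> t" "real (length v) \<le> t" using u v tl by linarith+
    have gB: "g \<in> B" "h \<in> B" using Bw u v ut by blast+
    define U where "U = dis m (weval (sym_group m) \<rho> u) (\<phi> g) \<union> dis m (weval (sym_group m) \<rho> v) (\<phi> h)"
    have "card U \<le> length u * C + length v * C"
      unfolding U_def using bound[of u] bound[of v] u v card_Un_le
      by (smt (verit) add_mono le_trans)
    also have "\<dots> \<le> l * C + l * C" using u(3) v(3) by (simp add: add_mono)
    also have "\<dots> < m" using Cb by linarith
    finally have "card U < card {1..m}" by simp
    moreover have "finite U" unfolding U_def dis_def by simp
    ultimately have "\<not> {1..m} \<subseteq> U" using card_mono[of U "{1..m}"] by linarith
    then obtain i where i: "i \<in> {1..m}" "i \<notin> U" by blast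
    have "weval (sym_group m) \<rho> u i = weval (sym_group m) \<rho> v i"
      using i eq unfolding U_def dis_def by auto
    then have "Lm (\<psi> g) i = Lm (\<psi> h) i" using key[of u] key[of v] u v ut by simp
    then have "\<gamma> (\<psi> g \<otimes>\<^bsub>\<Delta>\<^esub> \<beta> i) = \<gamma> (\<psi> h \<otimes>\<^bsub>\<Delta>\<^esub> \<beta> i)" using i by (simp add: Lm_def)
    moreover have "\<psi> g \<in> carrier \<Delta>" "\<psi> h \<in> carrier \<Delta>" using psiB(1) gB by blast+
    ultimately have "\<psi> g \<otimes>\<^bsub>\<Delta>\<^esub> \<beta> i = \<psi> h \<otimes>\<^bsub>\<Delta>\<^esub> \<beta> i"
      using \<gamma>inj \<beta>c[OF i(1)] by (meson D.m_closed inj_onD)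
    then have "\<psi> g = \<psi> h" using \<beta>c[OF i(1)] \<open>\<psi> g \<in> carrier \<Delta>\<close> \<open>\<psi> h \<in> carrier \<Delta>\<close>
      by (simp add: D.right_cancel)
    then show "g = h" using psiB(2) gB by (meson inj_onD)
  qed
  then show ?thesis using \<phi>(1) unfolding m_def by blast
qed

lemma getRF:
  fixes G :: "('g, 'b) monoid_scheme" and X :: "'x set" and p :: "'x \<Rightarrow> 'g"
    and \<Delta> :: "nat monoid" and \<psi> :: "'g \<Rightarrow> nat"
  assumes G: "group G" and finX0: "finite X" and pX: "p ` X \<subseteq> carrier G"
    and l: "l > 0" and tl: "real l \<le> t"
    and vp: "valid_pair G X p (1 / (2 * real l)) \<delta> E"
    and Elen: "\<forall>r\<in>E. real (length r) \<le> t"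
    and D: "finite_group \<Delta>" and psi: "local_embedding G (ball_S G (p ` X) t) \<Delta> \<psi>"
  shows "\<exists>D h. finite_group D \<and> card (carrier D) = fact (card (carrier \<Delta>)) \<and>
     h \<in> hom G D \<and> inj_on h (ball_S G (p ` X) (real l))"
proof -
  obtain \<phi> where \<phi>: "\<phi> \<in> hom G (sym_group (card (carrier \<Delta>)))"
      "inj_on \<phi> (ball_S G (p ` X) (real l))"
    using core[OF G finX0 pX l tl vp Elen D psi] by blast
  let ?H = "sym_group (card (carrier \<Delta>))"
  have finH: "finite (carrier ?H)"
    using sym_group_card_carrier[of "card (carrier \<Delta>)"]
    by (metis card.infinite fact_nonzero)
  obtain D f where Df: "finite_group D" "card (carrier D) = card (carrier ?H)" "f \<in> hom ?H D"
      "inj_on f (carrier ?H)"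
    using transport_nat[OF sym_group_is_group finH] by blast
  have hom: "f \<circ> \<phi> \<in> hom G D" using hom_compose[OF \<phi>(1) Df(3)] by (simp add: comp_def)
  have BG: "ball_S G (p ` X) (real l) \<subseteq> carrier G" using ball_S_finite_carrier[OF G finX0 pX] by blast
  have "\<phi> ` ball_S G (p ` X) (real l) \<subseteq> carrier ?H" using \<phi>(1) BG unfolding hom_def by auto
  then have "inj_on (f \<circ> \<phi>) (ball_S G (p ` X) (real l))"
    using \<phi>(2) Df(4) by (meson comp_inj_on inj_on_subset)
  then show ?thesis using Df(1,2) hom sym_group_card_carrier by metis
qed

theorem proposition2p14:
  fixes G :: "('g, 'b) monoid_scheme" and X :: "'x set" and p :: "'x \<Rightarrow> 'g"
  assumes "group G"
    and "finite X"
    and "epi_from_free G X p"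
    and "stable G X p"
    and "LEF G"
  shows "residually_finite G \<and>
    (\<forall>l::nat. l > 0 \<longrightarrow>
       max (fact (LEF_growth G (p ` X) (stab_fun G X p (2 * real l))))
           (fact (LEF_growth G (p ` X) (real l))) \<ge> RF_growth G (p ` X) (real l))"
proof -
  note G = assms(1) and finX0 = assms(2)
  have pX: "p ` X \<subseteq> carrier G" and surj: "weval G p ` free_words X = carrier G"
    using assms(3) unfolding epi_from_free_def by auto
  have ballfin: "finite (ball_S G (p ` X) t)" "ball_S G (p ` X) t \<subseteq> carrier G" for t
    using ball_S_finite_carrier[OF G finX0 pX] by auto
  have lef: "\<exists>D \<psi>. finite_group D \<and> local_embedding G (ball_S G (p ` X) t) D \<psi>" for t
    using assms(5) ballfin unfolding LEF_def by blast
  have vpex: "\<exists>\<delta> E. valid_pair G X p (1 / (2 * real l)) \<delta> E" if "l > 0" for l :: nat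
    using assms(4) that unfolding stable_def by auto
  have RF: "residually_finite G"
    unfolding residually_finite_def
  proof (intro ballI impI)
    fix g assume g: "g \<in> carrier G" "g \<noteq> \<one>\<^bsub>G\<^esub>"
    obtain w where w: "w \<in> free_words X" "g = weval G p w" using surj g(1) by auto
    define l where "l = max 1 (length w)"
    have l0: "l > 0" unfolding l_def by simp
    obtain \<delta> E where vp: "valid_pair G X p (1 / (2 * real l)) \<delta> E" using vpex[OF l0] by blast
    have finE: "finite E" using vp unfolding valid_pair_def by simp
    define t where "t = real (max l (Max (insert 0 (length ` E))))"
    have tl: "real l \<le> t" unfolding t_def by simp
    have Elen: "\<forall>r\<in>E. real (length r) \<le> t"
    proof
      fix r assume "r \<in> E"
      then have "length r \<le> Max (insert 0 (length ` E))" using finE by (simp add: Max_ge)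
      then show "real (length r) \<le> t" unfolding t_def by simp
    qed
    obtain \<Delta> \<psi> where D: "finite_group \<Delta>" "local_embedding G (ball_S G (p ` X) t) \<Delta> \<psi>"
      using lef by blast
    obtain D h where Dh: "finite_group D" "h \<in> hom G D" "inj_on h (ball_S G (p ` X) (real l))"
      using getRF[OF G finX0 pX l0 tl vp Elen D] by blast
    have gB: "g \<in> ball_S G (p ` X) (real l)" unfolding ball_S_X
      using w l_def unfolding free_words_def by fastforce
    have oneB: "\<one>\<^bsub>G\<^esub> \<in> ball_S G (p ` X) (real l)" unfolding ball_S_X
      by (rule CollectI, rule exI[of _ "[]"]) simp
    interpret gh: group_hom G D h using Dh G unfolding finite_group_def
      by (simp add: group_hom_def group_hom_axioms_def)
    have "h g \<noteq> h \<one>\<^bsub>G\<^esub>" using Dh(3) gB oneB g(2) by (meson inj_onD)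
    then have "h g \<noteq> \<one>\<^bsub>D\<^esub>" by simp
    then show "\<exists>D h. finite_group D \<and> h \<in> hom G D \<and> h g \<noteq> \<one>\<^bsub>D\<^esub>"
      using Dh(1,2) by blast
  qed
  have INEQ: "max (fact (LEF_growth G (p ` X) (stab_fun G X p (2 * real l))))
           (fact (LEF_growth G (p ` X) (real l))) \<ge> RF_growth G (p ` X) (real l)"
    if l0: "l > 0" for l :: nat
  proof -
    define V where "V = {wnorm E / \<delta> | \<delta> E. valid_pair G X p (1 / (2 * real l)) \<delta> E}"
    define F where "F = stab_fun G X p (2 * real l)"
    have FV: "F = Inf V" unfolding F_def V_def stab_fun_def by simp
    define P where "P n = (\<exists>\<delta> E. valid_pair G X p (1 / (2 * real l)) \<delta> E \<and> wnorm E = real n)" for n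
    obtain \<delta>0 E0 where vp0: "valid_pair G X p (1 / (2 * real l)) \<delta>0 E0" using vpex[OF l0] by blast
    have P0: "P (\<Sum>w\<in>E0. length w)" unfolding P_def wnorm_def using vp0 by blast
    define n0 where "n0 = (LEAST n. P n)"
    have Pn0: "P n0" unfolding n0_def by (rule LeastI[of P, OF P0])
    obtain \<delta> E where vp: "valid_pair G X p (1 / (2 * real l)) \<delta> E" and wE: "wnorm E = real n0"
      using Pn0 unfolding P_def by blast
    have n0F: "real n0 \<le> F" unfolding FV
    proof (rule cInf_greatest)
      show "V \<noteq> {}" unfolding V_def using vp0 by blast
      fix v assume "v \<in> V"
      then obtain \<delta>' E' where v: "v = wnorm E' / \<delta>'" and vp': "valid_pair G X p (1 / (2 * real l)) \<delta>' E'"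
        unfolding V_def by blast
      have d: "0 < \<delta>'" "\<delta>' \<le> 1" using vp' unfolding valid_pair_def by auto
      have "P (\<Sum>w\<in>E'. length w)" unfolding P_def wnorm_def using vp' by blast
      then have "n0 \<le> (\<Sum>w\<in>E'. length w)" unfolding n0_def by (rule Least_le)
      then have "real n0 \<le> wnorm E'" unfolding wnorm_def by (simp only: of_nat_le_iff)
      also have "wnorm E' \<le> wnorm E' / \<delta>'"
      proof -
        have nn: "wnorm E' \<ge> 0" unfolding wnorm_def by (rule of_nat_0_le_iff)
        have "wnorm E' * \<delta>' \<le> wnorm E'" using d nn by (simp add: mult_left_le)
        then show ?thesis using d by (simp add: le_divide_eq)
      qed
      finally show "real n0 \<le> v" using v by simp
    qed
    have finE: "finite E" using vp unfolding valid_pair_def by simp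
    define t where "t = max F (real l)"
    have tl: "real l \<le> t" unfolding t_def by simp
    have Elen: "\<forall>r\<in>E. real (length r) \<le> t"
    proof
      fix r assume "r \<in> E"
      then have "length r \<le> (\<Sum>w\<in>E. length w)" using finE by (simp add: member_le_sum)
      moreover have "(\<Sum>w\<in>E. length w) = n0" using wE unfolding wnorm_def by (simp only: of_nat_eq_iff)
      ultimately have "real (length r) \<le> real n0" by simp
      then show "real (length r) \<le> t" using n0F unfolding t_def by simp
    qed
    have ex: "\<exists>m D \<psi>. finite_group D \<and> card (carrier D) = m \<and> local_embedding G (ball_S G (p ` X) t) D \<psi>"
      using lef by blast
    obtain \<Delta> \<psi> where D: "finite_group \<Delta>" "card (carrier \<Delta>) = LEF_growth G (p ` X) t"
        "local_embedding G (ball_S G (p ` X) t) \<Delta> \<psi>"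
      using LeastI_ex[OF ex] unfolding LEF_growth_def by blast
    obtain D' h where Dh: "finite_group D'" "card (carrier D') = fact (card (carrier \<Delta>))"
        "h \<in> hom G D'" "inj_on h (ball_S G (p ` X) (real l))"
      using getRF[OF G finX0 pX l0 tl vp Elen D(1) D(3)] by blast
    have "RF_growth G (p ` X) (real l) \<le> fact (card (carrier \<Delta>))"
      unfolding RF_growth_def by (rule Least_le) (use Dh in blast)
    also have "\<dots> = fact (LEF_growth G (p ` X) t)" using D(2) by simp
    also have "\<dots> \<le> max (fact (LEF_growth G (p ` X) F)) (fact (LEF_growth G (p ` X) (real l)))"
      unfolding t_def by (cases "F \<le> real l") (simp_all add: max_def)
    finally show ?thesis unfolding F_def .
  qed
  show ?thesis using RF INEQ by blast
qed

end
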